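(* Let $\mathcal D$ be a finite domain. (i) The law of $\sigma_r$ under $\mu_{\mathcal D}$ is $\nu_{\mathcal D}(\sigma_r)=\frac1{Z_{\mathcal D}}2^{k(\theta(\sigma_r))}$ for $\sigma_r\in\{+,-\}^{F(\mathcal D)}$, where $Z_{\mathcal D}$ is a normalising constant. (ii) Conditionally on $\sigma_r$, the law of $\sigma_b$ under $\mu_{\mathcal D}$ is obtained by assigning to each connected component of $\theta(\sigma_r)$ a spin in $\{+,-\}$ uniformly and independently, and giving all faces of that component this blue spin.
   Context: $\mathbb H$ is the hexagonal lattice and $\mathbb T$ the dual triangular lattice (vertices = faces of $\mathbb H$). A domain is a subgraph $\mathcal D$ of $\mathbb H$ without isolated vertices for which there exists a self-avoiding polygon $\partial_E\mathcal D$ such that $E(\mathcal D)$ is the set of edges in the bounded component of $\mathbb H\setminus\partial_E\mathcal D$; $F(\mathcal D)$ is the set of faces adjacent to an edge of $\mathcal D$, and $\mathcal D^*$ is the subgraph of $\mathbb T$ induced by $F(\mathcal D)$. A pair $(\sigma_r,\sigma_b)\in\{+,-\}^{F(\mathcal D)}\times\{+,-\}^{F(\mathcal D)}$ is coherent if for all adjacent faces $u,v\in F(\mathcal D)$, $\sigma_r(u)=\sigma_r(v)$ or $\sigma_b(u)=\sigma_b(v)$; $\mu_{\mathcal D}$ is uniform on coherent pairs and $\nu_{\mathcal D}$ is the law of $\sigma_r$. For $\sigma\in\{+,-\}^{F(\mathcal D)}$, $\theta(\sigma)$ is the spanning subgraph of $\mathcal D^*$ with edge set $\{uv\in E(\mathcal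 D^* ):\sigma(u)\ne\sigma(v)\}$, and $k(\theta(\sigma))$ is its number of connected components (isolated vertices counted). *)

theory Defs
  imports "HOL-Probability.Probability_Mass_Function" "HOL-Library.FuncSet"
begin

text \<open>Faces of the hexagonal lattice H = vertices of the triangular lattice T,
  coordinatised as Z^2 (basis vectors 1 and e^(i pi/3)).\<close>
type_synonym face = "int \<times> int"

definition tadj :: "face \<Rightarrow> face \<Rightarrow> bool" where
  "tadj u v \<longleftrightarrow> (fst v - fst u, snd v - snd u) \<in>
     {(1,0), (-1,0), (0,1), (0,-1), (1,-1), (-1,1)}"

text \<open>Vertices of H = triangles of T (sets of three mutually adjacent faces).\<close>
definition is_hvertex :: "face set \<Rightarrow> bool" where
  "is_hvertex t \<longleftrightarrow> (\<exists>a b c. t = {a, b, c} \<and> tadj a b \<and> tadj b c \<and> tadj a c)"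

text \<open>Two vertices of H are adjacent iff their triangles share an edge of T.
  An edge of H is identified with its dual edge {u,v} of T (the two faces it separates).\<close>
definition hadj :: "face set \<Rightarrow> face set \<Rightarrow> bool" where
  "hadj t s \<longleftrightarrow> is_hvertex t \<and> is_hvertex s \<and> card (t \<inter> s) = 2"

definition sa_polygon :: "face set list \<Rightarrow> bool" where
  "sa_polygon ps \<longleftrightarrow> length ps \<ge> 3 \<and> distinct ps \<and>
     (\<forall>i < length ps. hadj (ps ! i) (ps ! ((i + 1) mod length ps)))"

definition poly_edges :: "face set list \<Rightarrow> face set set" where
  "poly_edges ps = {ps ! i \<inter> ps ! ((i + 1) mod length ps) | i. i < length ps}"

definition cut_rel :: "face set list \<Rightarrow> (face \<times> face) set" where
  "cut_rel ps = {(u, v). tadj u v \<and> {u, v} \<notin> poly_edges ps}"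

text \<open>Faces lying in the bounded component of the plane minus the polygon:
  those whose component in T minus the crossing edges is finite.\<close>
definition inside :: "face set list \<Rightarrow> face set" where
  "inside ps = {u. finite ((cut_rel ps)\<^sup>* `` {u})}"

definition dom_edges :: "face set list \<Rightarrow> face set set" where
  "dom_edges ps = {{u, v} | u v. tadj u v \<and> {u, v} \<notin> poly_edges ps \<and>
                    u \<in> inside ps \<and> v \<in> inside ps}"

text \<open>A domain, described by its edge set (it has no isolated vertices, so it is
  determined by its edges).\<close>
definition is_domain :: "face set set \<Rightarrow> bool" where
  "is_domain ED \<longleftrightarrow> (\<exists>ps. sa_polygon ps \<and> ED = dom_edges ps)"

definition dom_faces :: "face set set \<Rightarrow> face set" where
  "dom_faces ED = \<Union> ED"

text \<open>Spin configurations on F (True = +, False = -).\<close>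
definition spins :: "face set \<Rightarrow> (face \<Rightarrow> bool) set" where
  "spins F = F \<rightarrow>\<^sub>E (UNIV :: bool set)"

definition coherent :: "face set \<Rightarrow> (face \<Rightarrow> bool) \<Rightarrow> (face \<Rightarrow> bool) \<Rightarrow> bool" where
  "coherent F sr sb \<longleftrightarrow> (\<forall>u\<in>F. \<forall>v\<in>F. tadj u v \<longrightarrow> sr u = sr v \<or> sb u = sb v)"

definition coherent_pairs :: "face set \<Rightarrow> ((face \<Rightarrow> bool) \<times> (face \<Rightarrow> bool)) set" where
  "coherent_pairs F = {(sr, sb). sr \<in> spins F \<and> sb \<in> spins F \<and> coherent F sr sb}"

definition mu :: "face set set \<Rightarrow> ((face \<Rightarrow> bool) \<times> (face \<Rightarrow> bool)) pmf" where
  "mu ED = pmf_of_set (coherent_pairs (dom_faces ED))"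

definition nu :: "face set set \<Rightarrow> (face \<Rightarrow> bool) pmf" where
  "nu ED = map_pmf fst (mu ED)"

definition theta_rel :: "face set \<Rightarrow> (face \<Rightarrow> bool) \<Rightarrow> (face \<times> face) set" where
  "theta_rel F s = {(u, v). u \<in> F \<and> v \<in> F \<and> tadj u v \<and> s u \<noteq> s v}"

text \<open>Connected components of theta(sigma) (spanning subgraph on F), as sets of faces.\<close>
definition theta_comps :: "face set \<Rightarrow> (face \<Rightarrow> bool) \<Rightarrow> face set set" where
  "theta_comps F s = F // ((theta_rel F s)\<^sup>*)"

definition k_theta :: "face set \<Rightarrow> (face \<Rightarrow> bool) \<Rightarrow> nat" where
  "k_theta F s = card (theta_comps F s)"

definition blue_law :: "face set \<Rightarrow> (face \<Rightarrow> bool) \<Rightarrow> (face \<Rightarrow> bool) pmf" where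
  "blue_law F sr =
     map_pmf (\<lambda>\<tau>. \<lambda>u\<in>F. \<tau> ((theta_rel F sr)\<^sup>* `` {u}))
       (pmf_of_set (theta_comps F sr \<rightarrow>\<^sub>E (UNIV :: bool set)))"

end

theory Submission
  imports Defs
begin

lemma tadj_sym: "tadj u v \<Longrightarrow> tadj v u"
  unfolding tadj_def by auto

lemma cond_pmf_of_set:
  assumes "finite S" "S \<inter> A \<noteq> {}"
  shows "cond_pmf (pmf_of_set S) A = pmf_of_set (S \<inter> A)"
proof (rule pmf_eqI)
  fix i
  have S: "S \<noteq> {}" using assms by auto
  have ne: "set_pmf (pmf_of_set S) \<inter> A \<noteq> {}" using assms S by simp
  have c: "card (S \<inter> A) > 0" using assms by (simp add: card_gt_0_iff)
  show "pmf (cond_pmf (pmf_of_set S) A) i = pmf (pmf_of_set (S \<inter> A)) i"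
    using assms S c
    by (simp add: pmf_cond[OF ne] measure_pmf_of_set indicator_def)
qed

lemma rtrancl_const:
  assumes "(u, w) \<in> R\<^sup>*" "\<And>a b. (a, b) \<in> R \<Longrightarrow> f a = f b"
  shows "f u = f w"
  using assms(1) by induction (auto dest: assms(2))

lemma theta_sym: "sym (theta_rel F s)"
  unfolding sym_def theta_rel_def by (auto dest: tadj_sym)

lemma class_eq:
  assumes "(u, v) \<in> (theta_rel F s)\<^sup>*"
  shows "(theta_rel F s)\<^sup>* `` {u} = (theta_rel F s)\<^sup>* `` {v}"
proof -
  have "(v, u) \<in> (theta_rel F s)\<^sup>*"
    using assms theta_sym by (metis sym_rtrancl symD)
  then show ?thesis using assms
    by (auto intro: rtrancl_trans)
qed

definition blueset :: "face set \<Rightarrow> (face \<Rightarrow> bool) \<Rightarrow> (face \<Rightarrow> bool) set" where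
  "blueset F sr = {sb \<in> spins F. coherent F sr sb}"

definition Phi :: "face set \<Rightarrow> (face \<Rightarrow> bool) \<Rightarrow> (face set \<Rightarrow> bool) \<Rightarrow> (face \<Rightarrow> bool)" where
  "Phi F sr \<tau> = (\<lambda>u\<in>F. \<tau> ((theta_rel F sr)\<^sup>* `` {u}))"

lemma coherent_iff: "coherent F sr sb \<longleftrightarrow> (\<forall>a b. (a, b) \<in> theta_rel F sr \<longrightarrow> sb a = sb b)"
  unfolding coherent_def theta_rel_def by auto

lemma Phi_bij:
  "bij_betw (Phi F sr) (theta_comps F sr \<rightarrow>\<^sub>E (UNIV :: bool set)) (blueset F sr)"
proof (rule bij_betwI')
  let ?R = "theta_rel F sr"
  fix x y assume x: "x \<in> theta_comps F sr \<rightarrow>\<^sub>E (UNIV :: bool set)"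
    and y: "y \<in> theta_comps F sr \<rightarrow>\<^sub>E (UNIV :: bool set)"
  show "(Phi F sr x = Phi F sr y) = (x = y)"
  proof
    assume e: "Phi F sr x = Phi F sr y"
    show "x = y"
    proof (rule extensionalityI)
      show "x \<in> extensional (theta_comps F sr)" using x by (simp add: PiE_iff)
      show "y \<in> extensional (theta_comps F sr)" using y by (simp add: PiE_iff)
    next
      fix C assume "C \<in> theta_comps F sr"
      then obtain u where u: "u \<in> F" "C = ?R\<^sup>* `` {u}"
        unfolding theta_comps_def quotient_def by auto
      have "Phi F sr x u = Phi F sr y u" using e by simp
      then show "x C = y C" using u by (simp add: Phi_def)
    qed
  qed simp
next
  let ?R = "theta_rel F sr"
  fix x assume x: "x \<in> theta_comps F sr \<rightarrow>\<^sub>E (UNIV :: bool set)"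
  show "Phi F sr x \<in> blueset F sr"
    unfolding blueset_def spins_def
  proof (intro CollectI conjI)
    show "Phi F sr x \<in> F \<rightarrow>\<^sub>E UNIV" by (simp add: Phi_def)
    show "coherent F sr (Phi F sr x)"
      unfolding coherent_iff
    proof (intro allI impI)
      fix a b assume ab: "(a, b) \<in> ?R"
      then have "a \<in> F" "b \<in> F" unfolding theta_rel_def by auto
      moreover have "?R\<^sup>* `` {a} = ?R\<^sup>* `` {b}" using ab by (intro class_eq) auto
      ultimately show "Phi F sr x a = Phi F sr x b" by (simp add: Phi_def)
    qed
  qed
next
  let ?R = "theta_rel F sr"
  fix sb assume sb: "sb \<in> blueset F sr"
  then have sbF: "sb \<in> F \<rightarrow>\<^sub>E UNIV" and coh: "\<And>a b. (a, b) \<in> ?R \<Longrightarrow> sb a = sb b"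
    unfolding blueset_def spins_def coherent_iff by auto
  define \<tau> where "\<tau> = (\<lambda>C\<in>theta_comps F sr. sb (SOME w. w \<in> C))"
  have "\<tau> \<in> theta_comps F sr \<rightarrow>\<^sub>E (UNIV :: bool set)" unfolding \<tau>_def by simp
  moreover have "sb = Phi F sr \<tau>"
  proof (rule extensionalityI)
    show "sb \<in> extensional F" using sbF by (simp add: PiE_iff)
    show "Phi F sr \<tau> \<in> extensional F" by (simp add: Phi_def)
    fix u assume u: "u \<in> F"
    let ?C = "?R\<^sup>* `` {u}"
    have C: "?C \<in> theta_comps F sr" using u unfolding theta_comps_def quotient_def by auto
    have "u \<in> ?C" by simp
    then have "\<exists>w. w \<in> ?C" by blast
    then have "(SOME w. w \<in> ?C) \<in> ?C" by (rule someI_ex)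
    then have "(u, SOME w. w \<in> ?C) \<in> ?R\<^sup>*" by simp
    then have "sb u = sb (SOME w. w \<in> ?C)" by (rule rtrancl_const) (rule coh)
    then show "sb u = Phi F sr \<tau> u" using u C by (simp add: Phi_def \<tau>_def)
  qed
  ultimately show "\<exists>x\<in>theta_comps F sr \<rightarrow>\<^sub>E UNIV. sb = Phi F sr x" by blast
qed

lemma finite_comps: "finite F \<Longrightarrow> finite (theta_comps F sr)"
  unfolding theta_comps_def quotient_def by auto

lemma card_blueset:
  assumes "finite F"
  shows "card (blueset F sr) = 2 ^ k_theta F sr"
proof -
  have "card (blueset F sr) = card (theta_comps F sr \<rightarrow>\<^sub>E (UNIV :: bool set))"
    using Phi_bij bij_betw_same_card by metis
  also have "\<dots> = 2 ^ k_theta F sr"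
    using finite_comps[OF assms] by (simp add: card_PiE k_theta_def)
  finally show ?thesis .
qed

lemma blue_law_eq:
  assumes "finite F"
  shows "blue_law F sr = pmf_of_set (blueset F sr)"
proof -
  have b: "bij_betw (Phi F sr) (theta_comps F sr \<rightarrow>\<^sub>E (UNIV :: bool set)) (blueset F sr)"
    by (rule Phi_bij)
  have ne: "theta_comps F sr \<rightarrow>\<^sub>E (UNIV :: bool set) \<noteq> {}"
    by (simp add: PiE_eq_empty_iff)
  have fin: "finite (theta_comps F sr \<rightarrow>\<^sub>E (UNIV :: bool set))"
    using finite_comps[OF assms] by (simp add: finite_PiE)
  have "blue_law F sr = map_pmf (Phi F sr) (pmf_of_set (theta_comps F sr \<rightarrow>\<^sub>E (UNIV :: bool set)))"
    unfolding blue_law_def Phi_def ..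
  also have "\<dots> = pmf_of_set (Phi F sr ` (theta_comps F sr \<rightarrow>\<^sub>E (UNIV :: bool set)))"
    using b ne fin by (intro map_pmf_of_set_inj) (auto simp: bij_betw_def)
  also have "\<dots> = pmf_of_set (blueset F sr)" using b by (simp add: bij_betw_def)
  finally show ?thesis .
qed

lemma fiber: "sr \<in> spins F \<Longrightarrow> coherent_pairs F \<inter> {p. fst p = sr} = {sr} \<times> blueset F sr"
  unfolding coherent_pairs_def blueset_def by auto

theorem proposition2p7:
  fixes ED :: "face set set"
  assumes "is_domain ED" and "finite ED"
  shows "(\<exists>Z > 0. \<forall>sr \<in> spins (dom_faces ED).
            pmf (nu ED) sr = 2 ^ k_theta (dom_faces ED) sr / Z)
       \<and> (\<forall>sr \<in> spins (dom_faces ED).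
            map_pmf snd (cond_pmf (mu ED) {p. fst p = sr}) = blue_law (dom_faces ED) sr)"
proof -
  define F where "F = dom_faces ED"
  obtain ps where "ED = dom_edges ps" using assms(1) unfolding is_domain_def by auto
  then have "\<forall>e\<in>ED. finite e" unfolding dom_edges_def by auto
  then have finF: "finite F" unfolding F_def dom_faces_def using assms(2) by auto
  define CP where "CP = coherent_pairs F"
  have finS: "finite (spins F)" unfolding spins_def using finF by (simp add: finite_PiE)
  have finCP: "finite CP"
    by (rule finite_subset[of _ "spins F \<times> spins F"]) (auto simp: CP_def coherent_pairs_def finS)
  have "((\<lambda>u\<in>F. True), (\<lambda>u\<in>F. True)) \<in> CP"
    unfolding CP_def coherent_pairs_def spins_def coherent_def by auto
  then have neCP: "CP \<noteq> {}" by auto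
  have finB: "\<And>sr. finite (blueset F sr)"
    using finS by (auto simp: blueset_def)
  have neB: "\<And>sr. blueset F sr \<noteq> {}"
    using card_blueset[OF finF] by (metis card.empty power_not_zero zero_neq_numeral)
  have mu: "mu ED = pmf_of_set CP" unfolding mu_def CP_def F_def ..
  have P1: "\<forall>sr \<in> spins F. pmf (nu ED) sr = 2 ^ k_theta F sr / real (card CP)"
  proof
    fix sr assume sr: "sr \<in> spins F"
    have "pmf (nu ED) sr = measure (pmf_of_set CP) (fst -` {sr})"
      unfolding nu_def mu by (simp add: pmf_map)
    also have "\<dots> = card (CP \<inter> {p. fst p = sr}) / card CP"
      using finCP neCP by (simp add: measure_pmf_of_set vimage_def)
    also have "CP \<inter> {p. fst p = sr} = {sr} \<times> blueset F sr"
      unfolding CP_def using fiber[OF sr] .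
    also have "card \<dots> = 2 ^ k_theta F sr"
      using card_blueset[OF finF] by (simp add: card_cartesian_product)
    finally show "pmf (nu ED) sr = 2 ^ k_theta F sr / real (card CP)" by simp
  qed
  have P2: "\<forall>sr \<in> spins F. map_pmf snd (cond_pmf (mu ED) {p. fst p = sr}) = blue_law F sr"
  proof
    fix sr assume sr: "sr \<in> spins F"
    have fb: "CP \<inter> {p. fst p = sr} = {sr} \<times> blueset F sr"
      unfolding CP_def using fiber[OF sr] .
    have "cond_pmf (mu ED) {p. fst p = sr} = pmf_of_set ({sr} \<times> blueset F sr)"
      unfolding mu using cond_pmf_of_set[OF finCP, of "{p. fst p = sr}"] fb neB[of sr] by simp
    moreover have "map_pmf snd (pmf_of_set ({sr} \<times> blueset F sr)) = pmf_of_set (blueset F sr)"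
      using neB[of sr] finB[of sr]
      by (subst map_pmf_of_set_inj) (auto simp: inj_on_def)
    ultimately show "map_pmf snd (cond_pmf (mu ED) {p. fst p = sr}) = blue_law F sr"
      using blue_law_eq[OF finF] by simp
  qed
  have "card CP > 0" using finCP neCP by (simp add: card_gt_0_iff)
  then show ?thesis using P1 P2 unfolding F_def by (intro conjI exI[of _ "real (card CP)"]) auto
qed

end
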